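(* Let $(C_*,\partial,\ell)$ be an ascending chain complex over a field $\kappa$ such that for every $k$ the filtered vector space $(C_k,\ell|_{C_k})$ satisfies the best approximation property. Then there are subcomplexes $A_*$ and $\mathcal{H}_*$ of $C_*$ such that: (1) for each $k$, $C_k=A_k\oplus\mathcal{H}_k$ and $\ell(a+h)=\max\{\ell(a),\ell(h)\}$ for all $a\in A_k$, $h\in\mathcal{H}_k$; (2) $\partial|_{\mathcal{H}_*}=0$, and for each $k$ the restriction to $\mathcal{H}_k$ of the projection $\ker\partial|_{C_k}\to H_k(C_* )$ is an isomorphism of filtered vector spaces $(\mathcal{H}_k,\ell|_{\mathcal{H}_k})\to(H_k(C_* ),\rho|_{H_k(C_* )})$, where $\rho$ is the spectral invariant function; (3) $H_k(A_* )=0$ for all $k$.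
   Context: An ascending chain complex over $\kappa$ is a triple $(C_*,\partial,\ell)$ where $(C_*=\bigoplus_{k\in\mathbb{Z}}C_k,\partial)$ is a chain complex of $\kappa$-vector spaces and $\ell\colon C_*\to\mathbb{R}\cup\{-\infty\}$ satisfies: $\ell(x)=-\infty$ iff $x=0$; $\ell(\sum_i c_ix_i)\le\max\{\ell(x_i): c_i\neq 0\}$, with equality if the $x_i$ lie in pairwise distinct degrees; and $\ell(\partial x)\le\ell(x)$. A filtered vector space $(V,\ell)$ (with $\ell(v)=-\infty$ iff $v=0$, $\ell(cv)=\ell(v)$ for $c\ne0$, $\ell(v+w)\le\max\{\ell(v),\ell(w)\}$) satisfies the best approximation property if for every proper subspace $W\subsetneq V$ and every $v\in V\setminus W$ there is $w_0\in W$ with $\ell(v-w_0)\le\ell(v-w)$ for all $w\in W$. The spectral invariant function $\rho\colon H_*(C_* )\to\mathbb{R}\cup\{-\infty\}$ is $\rho(h)=\inf\{\ell(c): c\in\ker\partial,\ [c]=h\}$. *)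

theory Defs
  imports Complex_Main "HOL-Library.Extended_Real"
begin

text \<open>The graded space C_* is modelled inside an ambient vector space of type 'v
  (over a field 'k, scalar multiplication scale) as an internal direct sum of
  subspaces C k, k an integer.\<close>

definition graded_direct_sum :: "('k::field \<Rightarrow> 'v::ab_group_add \<Rightarrow> 'v) \<Rightarrow> (int \<Rightarrow> 'v set) \<Rightarrow> bool" where
  "graded_direct_sum scale C \<longleftrightarrow>
     (\<forall>k. module.subspace scale (C k)) \<and>
     (\<forall>v. \<exists>f. finite {k. f k \<noteq> 0} \<and> (\<forall>k. f k \<in> C k) \<and> v = (\<Sum>k\<in>{k. f k \<noteq> 0}. f k)) \<and>
     (\<forall>f. finite {k. f k \<noteq> 0} \<and> (\<forall>k. f k \<in> C k) \<and> (\<Sum>k\<in>{k. f k \<noteq> 0}. f k) = 0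
          \<longrightarrow> (\<forall>k. f k = 0))"

definition chain_complex :: "('k::field \<Rightarrow> 'v::ab_group_add \<Rightarrow> 'v) \<Rightarrow> (int \<Rightarrow> 'v set) \<Rightarrow> ('v \<Rightarrow> 'v) \<Rightarrow> bool" where
  "chain_complex scale C d \<longleftrightarrow>
     graded_direct_sum scale C \<and> Vector_Spaces.linear scale scale d \<and>
     (\<forall>k. d ` C k \<subseteq> C (k - 1)) \<and> (\<forall>x. d (d x) = 0)"

definition ascending_chain_complex ::
  "('k::field \<Rightarrow> 'v::ab_group_add \<Rightarrow> 'v) \<Rightarrow> (int \<Rightarrow> 'v set) \<Rightarrow> ('v \<Rightarrow> 'v) \<Rightarrow> ('v \<Rightarrow> ereal) \<Rightarrow> bool" where
  "ascending_chain_complex scale C d L \<longleftrightarrow>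
     chain_complex scale C d \<and>
     (\<forall>x. L x \<noteq> \<infinity>) \<and>
     (\<forall>x. L x = -\<infinity> \<longleftrightarrow> x = 0) \<and>
     (\<forall>(I::nat set) (c::nat \<Rightarrow> 'k) (x::nat \<Rightarrow> 'v). finite I \<longrightarrow>
        L (\<Sum>i\<in>I. scale (c i) (x i)) \<le> (SUP i\<in>{i\<in>I. c i \<noteq> 0}. L (x i))) \<and>
     (\<forall>(I::nat set) (c::nat \<Rightarrow> 'k) (x::nat \<Rightarrow> 'v) (deg::nat \<Rightarrow> int).
        finite I \<and> inj_on deg I \<and> (\<forall>i\<in>I. x i \<in> C (deg i)) \<longrightarrow>
        L (\<Sum>i\<in>I. scale (c i) (x i)) = (SUP i\<in>{i\<in>I. c i \<noteq> 0}. L (x i))) \<and>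
     (\<forall>x. L (d x) \<le> L x)"

definition best_approx :: "('k::field \<Rightarrow> 'v::ab_group_add \<Rightarrow> 'v) \<Rightarrow> 'v set \<Rightarrow> ('v \<Rightarrow> ereal) \<Rightarrow> bool" where
  "best_approx scale V L \<longleftrightarrow>
     (\<forall>W. module.subspace scale W \<and> W \<subset> V \<longrightarrow>
        (\<forall>v\<in>V - W. \<exists>w0\<in>W. \<forall>w\<in>W. L (v - w0) \<le> L (v - w)))"

definition subcomplex :: "('k::field \<Rightarrow> 'v::ab_group_add \<Rightarrow> 'v) \<Rightarrow> (int \<Rightarrow> 'v set) \<Rightarrow> ('v \<Rightarrow> 'v) \<Rightarrow> (int \<Rightarrow> 'v set) \<Rightarrow> bool" where
  "subcomplex scale C d A \<longleftrightarrow>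
     (\<forall>k. module.subspace scale (A k) \<and> A k \<subseteq> C k \<and> d ` A k \<subseteq> A (k - 1))"

definition hom_class :: "('v::ab_group_add \<Rightarrow> 'v) \<Rightarrow> 'v \<Rightarrow> 'v set" where
  "hom_class d c = {c + b | b. b \<in> range d}"

definition homology_deg :: "(int \<Rightarrow> 'v::ab_group_add set) \<Rightarrow> ('v \<Rightarrow> 'v) \<Rightarrow> int \<Rightarrow> 'v set set" where
  "homology_deg C d k = hom_class d ` {c \<in> C k. d c = 0}"

definition spectral_invariant :: "('v::ab_group_add \<Rightarrow> 'v) \<Rightarrow> ('v \<Rightarrow> ereal) \<Rightarrow> 'v set \<Rightarrow> ereal" where
  "spectral_invariant d L h = Inf (L ` {c. d c = 0 \<and> hom_class d c = h})"

end

theory Submission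
  imports Defs
begin

definition orth :: "('v::ab_group_add \<Rightarrow> ereal) \<Rightarrow> 'v set \<Rightarrow> 'v set \<Rightarrow> bool" where
  "orth L U W \<longleftrightarrow> (\<forall>u\<in>U. \<forall>w\<in>W. L (u + w) = max (L u) (L w))"

context vector_space
begin

lemma sum_subspace:
  assumes "subspace U" "subspace W"
  shows "subspace {u + w | u w. u \<in> U \<and> w \<in> W}"
proof (rule subspaceI)
  show "0 \<in> {u + w | u w. u \<in> U \<and> w \<in> W}"
    using assms by (auto intro!: exI[of _ 0] simp: subspace_0)
next
  fix x y assume "x \<in> {u + w | u w. u \<in> U \<and> w \<in> W}" "y \<in> {u + w | u w. u \<in> U \<and> w \<in> W}"
  then obtain u1 w1 u2 w2 where "x = u1 + w1" "y = u2 + w2" "u1 \<in> U" "u2 \<in> U" "w1 \<in> W" "w2 \<in> W"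
    by blast
  then show "x + y \<in> {u + w | u w. u \<in> U \<and> w \<in> W}"
  proof -
    have "x + y = (u1 + u2) + (w1 + w2)" using \<open>x = u1 + w1\<close> \<open>y = u2 + w2\<close> by (simp add: algebra_simps)
    moreover have "u1 + u2 \<in> U" "w1 + w2 \<in> W" using assms \<open>u1 \<in> U\<close> \<open>u2 \<in> U\<close> \<open>w1 \<in> W\<close> \<open>w2 \<in> W\<close>
      by (simp_all add: subspace_add)
    ultimately show ?thesis by blast
  qed
next
  fix c x assume "x \<in> {u + w | u w. u \<in> U \<and> w \<in> W}"
  then obtain u1 w1 where "x = u1 + w1" "u1 \<in> U" "w1 \<in> W" by blast
  then show "c *s x \<in> {u + w | u w. u \<in> U \<and> w \<in> W}"
  proof -
    have "c *s x = c *s u1 + c *s w1" using \<open>x = u1 + w1\<close> by (simp add: scale_right_distrib)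
    moreover have "c *s u1 \<in> U" "c *s w1 \<in> W" using assms \<open>u1 \<in> U\<close> \<open>w1 \<in> W\<close>
      by (simp_all add: subspace_scale)
    ultimately show ?thesis by blast
  qed
qed

lemma orth_compl:
  assumes Ltri: "\<And>x y. L (x + y) \<le> max (L x) (L y)"
    and Lsc: "\<And>c x. c \<noteq> 0 \<Longrightarrow> L (c *s x) = L x"
    and V: "subspace V" and ba: "best_approx scale V L"
    and W: "subspace W" "W \<subseteq> V"
    and U0: "subspace U0" "U0 \<subseteq> V" "U0 \<inter> W = {0}" "orth L U0 W"
  shows "\<exists>U. subspace U \<and> U0 \<subseteq> U \<and> U \<subseteq> V \<and> U \<inter> W = {0} \<and> orth L U W \<and>
     {u + w | u w. u \<in> U \<and> w \<in> W} = V"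
proof -
  have Lneg: "L (- x) = L x" for x
    using Lsc[of "-1" x] by simp
  define F where "F = {U. subspace U \<and> U0 \<subseteq> U \<and> U \<subseteq> V \<and> U \<inter> W = {0} \<and> orth L U W}"
  have "\<exists>M\<in>F. \<forall>X\<in>F. M \<subseteq> X \<longrightarrow> X = M"
  proof (rule subset_Zorn_nonempty)
    show "F \<noteq> {}" using U0 unfolding F_def by auto
  next
    fix Ch assume ne: "Ch \<noteq> {}" and "subset.chain F Ch"
    then have chF: "Ch \<subseteq> F" and ch: "\<forall>X\<in>Ch. \<forall>Y\<in>Ch. X \<subseteq> Y \<or> Y \<subseteq> X"
      by (auto simp: subset_chain_def)
    from ne obtain X0 where X0: "X0 \<in> Ch" by blast
    have sub: "subspace (\<Union>Ch)"
    proof (rule subspaceI)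
      show "0 \<in> \<Union>Ch" using X0 chF by (auto simp: F_def subspace_0)
    next
      fix x y assume "x \<in> \<Union>Ch" "y \<in> \<Union>Ch"
      then obtain X Y where XY: "X \<in> Ch" "Y \<in> Ch" "x \<in> X" "y \<in> Y" by blast
      then have "X \<subseteq> Y \<or> Y \<subseteq> X" using ch by blast
      then show "x + y \<in> \<Union>Ch"
      proof
        assume "X \<subseteq> Y" then show ?thesis using XY chF by (auto simp: F_def intro!: subspace_add)
      next
        assume "Y \<subseteq> X" then show ?thesis using XY chF by (auto simp: F_def intro!: subspace_add)
      qed
    next
      fix c x assume "x \<in> \<Union>Ch"
      then obtain X where "X \<in> Ch" "x \<in> X" by blast
      then show "c *s x \<in> \<Union>Ch" using chF by (auto simp: F_def intro!: subspace_scale)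
    qed
    show "\<Union>Ch \<in> F"
      unfolding F_def
    proof (intro CollectI conjI sub)
      show "U0 \<subseteq> \<Union>Ch" using X0 chF unfolding F_def by blast
      show "\<Union>Ch \<subseteq> V" using chF by (auto simp: F_def)
      show "\<Union>Ch \<inter> W = {0}" using chF X0 by (auto simp: F_def)
      show "orth L (\<Union>Ch) W" using chF by (auto simp: F_def orth_def)
    qed
  qed
  then obtain M where MF: "M \<in> F" and Mmax: "\<forall>X\<in>F. M \<subseteq> X \<longrightarrow> X = M" by blast
  from MF have Msub: "subspace M" and U0M: "U0 \<subseteq> M" and MV: "M \<subseteq> V" and MW: "M \<inter> W = {0}"
    and Morth: "orth L M W" by (auto simp: F_def)
  define S where "S = {u + w | u w. u \<in> M \<and> w \<in> W}"
  have Ssub: "subspace S" unfolding S_def using Msub W(1) by (rule sum_subspace)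
  have SV: "S \<subseteq> V" unfolding S_def using MV W V by (auto intro: subspace_add)
  have "S = V"
  proof (rule ccontr)
    assume "S \<noteq> V"
    with SV obtain v where v: "v \<in> V" "v \<notin> S" by blast
    from ba Ssub SV \<open>S \<noteq> V\<close> v obtain w0 where w0: "w0 \<in> S" and best: "\<forall>x\<in>S. L (v - w0) \<le> L (v - x)"
      unfolding best_approx_def by blast
    define v' where "v' = v - w0"
    have v'V: "v' \<in> V" unfolding v'_def using v w0 SV V by (auto intro: subspace_diff)
    have v'S: "v' \<notin> S"
    proof
      assume "v' \<in> S" then have "v' + w0 \<in> S" using w0 Ssub by (simp add: subspace_add)
      then show False using v by (simp add: v'_def)
    qed
    have key: "L v' \<le> L (v' + x)" if "x \<in> S" for x
    proof -
      have "w0 - x \<in> S" using w0 that Ssub by (simp add: subspace_diff)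
      then have "L (v - w0) \<le> L (v - (w0 - x))" using best by blast
      then show ?thesis by (simp add: v'_def algebra_simps)
    qed
    define M' where "M' = {m + c *s v' | m c. m \<in> M}"
    have MM': "M \<subseteq> M'"
    proof
      fix x assume "x \<in> M"
      moreover have "x = x + 0 *s v'" by simp
      ultimately show "x \<in> M'" unfolding M'_def by blast
    qed
    have v'M': "v' \<in> M'" unfolding M'_def using Msub
      by (auto intro!: exI[of _ 0] exI[of _ 1] simp: subspace_0)
    have v'M: "v' \<notin> M"
    proof
      assume "v' \<in> M" then have "v' + 0 \<in> S" unfolding S_def using W subspace_0 by blast
      then show False using v'S by simp
    qed
    have M'sub: "subspace M'"
    proof (rule subspaceI)
      show "0 \<in> M'" using MM' Msub subspace_0 by blast
    next
      fix x y assume "x \<in> M'" "y \<in> M'"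
      then obtain m1 c1 m2 c2 where "x = m1 + c1 *s v'" "y = m2 + c2 *s v'" "m1 \<in> M" "m2 \<in> M"
        unfolding M'_def by blast
      then show "x + y \<in> M'" unfolding M'_def using Msub
        by (auto intro!: exI[of _ "m1 + m2"] exI[of _ "c1 + c2"] simp: subspace_add algebra_simps)
    next
      fix a x assume "x \<in> M'"
      then obtain m1 c1 where "x = m1 + c1 *s v'" "m1 \<in> M" unfolding M'_def by blast
      then show "a *s x \<in> M'" unfolding M'_def using Msub
        by (auto intro!: exI[of _ "a *s m1"] exI[of _ "a * c1"] simp: subspace_scale algebra_simps)
    qed
    have M'V: "M' \<subseteq> V" unfolding M'_def using MV v'V V
      by (auto intro!: subspace_add subspace_scale)
    have M'W: "M' \<inter> W = {0}"
    proof (intro equalityI subsetI)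
      fix x assume x: "x \<in> M' \<inter> W"
      then obtain m c where xm: "x = m + c *s v'" "m \<in> M" unfolding M'_def by blast
      show "x \<in> {0}"
      proof (cases "c = 0")
        case True then show ?thesis using xm x MW by auto
      next
        case False
        have "c *s v' = x - m" using xm by simp
        then have "inverse c *s (c *s v') = inverse c *s (x - m)" by simp
        then have "v' = (- inverse c) *s m + inverse c *s x"
          using False by (simp add: algebra_simps)
        moreover have "(- inverse c) *s m \<in> M" using xm(2) Msub subspace_scale by blast
        moreover have "inverse c *s x \<in> W" using x W by (simp add: subspace_scale)
        ultimately have "v' \<in> S" unfolding S_def by blast
        then show ?thesis using v'S by simp
      qed
    next
      fix x :: 'b assume "x \<in> {0}" then show "x \<in> M' \<inter> W" using M'sub W by (simp add: subspace_0)
    qed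
    have M'orth: "orth L M' W"
      unfolding orth_def
    proof (intro ballI)
      fix y w assume y: "y \<in> M'" and w: "w \<in> W"
      then obtain m c where ym: "y = m + c *s v'" "m \<in> M" unfolding M'_def by blast
      show "L (y + w) = max (L y) (L w)"
      proof (cases "c = 0")
        case True then show ?thesis using ym w Morth by (simp add: orth_def)
      next
        case False
        define z where "z = y + w"
        have z1: "L v' \<le> L z"
        proof -
          have "inverse c *s m \<in> M" "inverse c *s w \<in> W" using ym(2) w Msub W(1) subspace_scale by blast+
          then have "inverse c *s m + inverse c *s w \<in> S" unfolding S_def by blast
          then have "L v' \<le> L (v' + (inverse c *s m + inverse c *s w))" by (rule key)
          also have "\<dots> = L (c *s (v' + (inverse c *s m + inverse c *s w)))" using Lsc False by simp
          also have "c *s (v' + (inverse c *s m + inverse c *s w)) = z"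
            using False by (simp add: z_def ym algebra_simps)
          finally show ?thesis .
        qed
        have z2: "L m \<le> L z"
        proof (cases "L m \<le> L v'")
          case True then show ?thesis using z1 by simp
        next
          case False
          have "L (m + w) = max (L m) (L w)" using Morth ym w by (simp add: orth_def)
          then have "L v' < L (m + w)" using False by (simp add: less_max_iff_disj not_le)
          have "m + w = z + (- c) *s v'" by (simp add: z_def ym)
          then have "L (m + w) \<le> max (L z) (L ((- c) *s v'))" using Ltri[of z "(- c) *s v'"] by simp
          also have "L ((- c) *s v') = L v'" using Lsc[of "- c" v'] \<open>c \<noteq> 0\<close> by simp
          finally have "L (m + w) \<le> L z" using \<open>L v' < L (m + w)\<close>
            by (simp add: max_def split: if_splits)
          moreover have "L m \<le> L (m + w)" using \<open>L (m + w) = max (L m) (L w)\<close> by simp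
          ultimately show ?thesis by simp
        qed
        have z3: "L y \<le> L z"
        proof -
          have "L y \<le> max (L m) (L (c *s v'))" using Ltri ym by simp
          also have "L (c *s v') = L v'" using Lsc False by simp
          finally show ?thesis using z1 z2 by (meson max.bounded_iff order_trans)
        qed
        have z4: "L w \<le> L z"
        proof -
          have "w = z + - y" by (simp add: z_def)
          then have "L w \<le> max (L z) (L (- y))" using Ltri[of z "- y"] by simp
          then show ?thesis using z3 Lneg[of y] by (simp add: max_def split: if_splits)
        qed
        have "L z \<le> max (L y) (L w)" using Ltri z_def by simp
        then show ?thesis using z3 z4 z_def by (simp add: antisym)
      qed
    qed
    have "M' \<in> F" unfolding F_def using M'sub U0M MM' M'V M'W M'orth by auto
    then have "M' = M" using Mmax MM' by blast
    then show False using v'M' v'M by simp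
  qed
  then show ?thesis using MF S_def by (auto simp: F_def)
qed

end


lemma deg_bound:
  fixes scale :: "'k::field \<Rightarrow> 'v::ab_group_add \<Rightarrow> 'v" and L :: "'v \<Rightarrow> ereal"
  assumes vs: "vector_space scale"
   and ax: "\<forall>(I::nat set) (c::nat \<Rightarrow> 'k) (x::nat \<Rightarrow> 'v) (deg::nat \<Rightarrow> int).
        finite I \<and> inj_on deg I \<and> (\<forall>i\<in>I. x i \<in> C (deg i)) \<longrightarrow>
        L (\<Sum>i\<in>I. scale (c i) (x i)) = (SUP i\<in>{i\<in>I. c i \<noteq> 0}. L (x i))"
   and S: "finite (S::int set)" "inj_on dg S" "\<forall>j\<in>S. g j \<in> C (dg j)" "k \<in> S"
  shows "L (g k) \<le> L (\<Sum>j\<in>S. g j)"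
proof -
  interpret vector_space scale by fact
  let ?I = "to_nat ` S"
  have inj: "inj_on (\<lambda>i. dg (from_nat i)) ?I"
    using S(2) by (auto simp: inj_on_def)
  have "L (\<Sum>i\<in>?I. scale 1 (g (from_nat i))) = (SUP i\<in>{i\<in>?I. (1::'k) \<noteq> 0}. L (g (from_nat i)))"
    using ax[rule_format, where I="?I" and c="\<lambda>_. 1" and x="\<lambda>i. g (from_nat i)" and deg="\<lambda>i. dg (from_nat i)"] S inj
    by auto
  moreover have "(\<Sum>i\<in>?I. scale 1 (g (from_nat i))) = (\<Sum>j\<in>S. g j)"
    by (simp add: sum.reindex inj_on_def)
  moreover have "L (g k) \<le> (SUP i\<in>{i\<in>?I. (1::'k) \<noteq> 0}. L (g (from_nat i)))"
    using S(4) by (intro SUP_upper2[of "to_nat k"]) auto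
  ultimately show ?thesis by simp
qed

lemma hc_mem: "d 0 = 0 \<Longrightarrow> c \<in> hom_class d c"
  unfolding hom_class_def by (auto intro!: exI[of _ 0] image_eqI[of 0 d 0])

lemma hc_rep: "c \<in> hom_class d h \<Longrightarrow> \<exists>y. c = h + d y"
  unfolding hom_class_def by blast

lemma hc_shift:
  assumes add: "\<And>x y. d (x + y) = d x + d y"
  shows "hom_class d (x + d y) = hom_class d x"
proof -
  have dm: "d (u - y) = d u - d y" for u
    using add[of "u - y" y] by (simp add: algebra_simps)
  show ?thesis unfolding hom_class_def
  proof (intro equalityI subsetI)
    fix z assume "z \<in> {x + d y + b |b. b \<in> range d}"
    then obtain u where "z = x + d y + d u" by blast
    then have "z = x + d (y + u)" by (simp add: add algebra_simps)
    then show "z \<in> {x + b |b. b \<in> range d}" by blast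
  next
    fix z assume "z \<in> {x + b |b. b \<in> range d}"
    then obtain u where "z = x + d u" by blast
    then have "z = x + d y + d (u - y)" by (simp add: dm algebra_simps)
    then show "z \<in> {x + d y + b |b. b \<in> range d}" by blast
  qed
qed


theorem proposition3p12:
  fixes scale :: "'k::field \<Rightarrow> 'v::ab_group_add \<Rightarrow> 'v"
    and C :: "int \<Rightarrow> 'v set" and d :: "'v \<Rightarrow> 'v" and L :: "'v \<Rightarrow> ereal"
  assumes "vector_space scale"
    and "ascending_chain_complex scale C d L"
    and "\<forall>k. best_approx scale (C k) L"
  shows "\<exists>A H. subcomplex scale C d A \<and> subcomplex scale C d H \<and>
    (\<forall>k. {a + h | a h. a \<in> A k \<and> h \<in> H k} = C k \<and> A k \<inter> H k = {0} \<and>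
         (\<forall>a\<in>A k. \<forall>h\<in>H k. L (a + h) = max (L a) (L h))) \<and>
    (\<forall>k. \<forall>h\<in>H k. d h = 0) \<and>
    (\<forall>k. bij_betw (hom_class d) (H k) (homology_deg C d k) \<and>
         (\<forall>h\<in>H k. spectral_invariant d L (hom_class d h) = L h)) \<and>
    (\<forall>k. \<forall>a\<in>A k. d a = 0 \<longrightarrow> a \<in> d ` A (k + 1))"
proof -
  interpret vector_space scale by fact
  note A1 = assms(2)[unfolded ascending_chain_complex_def]
  note cc = A1[THEN conjunct1]
  note L0' = A1[THEN conjunct2, THEN conjunct2, THEN conjunct1]
  note Lsum = A1[THEN conjunct2, THEN conjunct2, THEN conjunct2, THEN conjunct1]
  note Ldeg = A1[THEN conjunct2, THEN conjunct2, THEN conjunct2, THEN conjunct2, THEN conjunct1]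
  note A2 = cc[unfolded chain_complex_def]
  note gds = A2[THEN conjunct1]
  note lin = A2[THEN conjunct2, THEN conjunct1]
  note dC' = A2[THEN conjunct2, THEN conjunct2, THEN conjunct1]
  note dd' = A2[THEN conjunct2, THEN conjunct2, THEN conjunct2]
  note A3 = gds[unfolded graded_direct_sum_def]
  note Csub' = A3[THEN conjunct1]
  note decomp' = A3[THEN conjunct2, THEN conjunct1]
  have Csub: "\<And>k. subspace (C k)" using Csub' by (rule spec)
  have decomp: "\<And>v. \<exists>f. finite {k. f k \<noteq> 0} \<and> (\<forall>k. f k \<in> C k) \<and> v = (\<Sum>k\<in>{k. f k \<noteq> 0}. f k)"
    using decomp' by (rule spec)
  have dadd: "\<And>x y. d (x + y) = d x + d y" using lin by (simp add: Vector_Spaces.linear_iff)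
  have dsc: "\<And>c x. d (scale c x) = scale c (d x)" using lin by (simp add: Vector_Spaces.linear_iff)
  interpret dA: additive d by unfold_locales (rule dadd)
  have dC: "\<And>k x. x \<in> C k \<Longrightarrow> d x \<in> C (k - 1)" using dC' by blast
  have dd: "\<And>x. d (d x) = 0" using dd' by (rule spec)
  have L0: "\<And>x. L x = -\<infinity> \<longleftrightarrow> x = 0" using L0' by (rule spec)
  have Ltri: "L (x + y) \<le> max (L x) (L y)" for x y
  proof -
    have "L (\<Sum>i\<in>{0::nat,1}. scale 1 (if i = 0 then x else y)) \<le> (SUP i\<in>{i\<in>{0::nat,1}. (1::'k) \<noteq> 0}. L (if i = 0 then x else y))"
      using Lsum[rule_format, where I="{0::nat,1}" and c="\<lambda>_. 1" and x="\<lambda>i. if i = 0 then x else y"] by simp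
    moreover have "{i\<in>{0::nat,1}. (1::'k) \<noteq> 0} = {0,1}" by auto
    ultimately show ?thesis by (simp add: sup_max)
  qed
  have Lsc1: "L (scale c x) \<le> L x" if "c \<noteq> 0" for c x
  proof -
    have "L (\<Sum>i\<in>{0::nat}. scale c x) \<le> (SUP i\<in>{i\<in>{0::nat}. c \<noteq> 0}. L x)"
      using Lsum[rule_format, where I="{0::nat}" and c="\<lambda>_. c" and x="\<lambda>i. x"] by simp
    then show ?thesis using that by simp
  qed
  have Lsc: "L (scale c x) = L x" if "c \<noteq> 0" for c x
  proof -
    have "L x = L (scale (inverse c) (scale c x))" using that by simp
    also have "\<dots> \<le> L (scale c x)" using that by (intro Lsc1) simp
    finally show ?thesis using Lsc1[OF that, of x] by simp
  qed
  have G4: "\<exists>y'\<in>C (k+1). L (h + d y') \<le> L (h + d y)" if hC: "h \<in> C k" for h y k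
  proof -
    obtain f where f: "finite {j. f j \<noteq> 0}" "\<forall>j. f j \<in> C j" "y = (\<Sum>j\<in>{j. f j \<noteq> 0}. f j)"
      using decomp by blast
    define S where "S = insert (k+1) {j. f j \<noteq> 0}"
    have Sfin: "finite S" using f(1) by (simp add: S_def)
    have kS: "k + 1 \<in> S" by (simp add: S_def)
    have yS: "y = (\<Sum>j\<in>S. f j)" unfolding f(3) using Sfin
      by (intro sum.mono_neutral_left) (auto simp: S_def)
    have dyS: "d y = (\<Sum>j\<in>S. d (f j))" unfolding yS by (rule dA.sum)
    define e where "e j = (if j = k + 1 then h + d (f j) else d (f j))" for j
    have "(\<Sum>j\<in>S. e j) = e (k+1) + (\<Sum>j\<in>S - {k+1}. e j)" using Sfin kS by (rule sum.remove)
    also have "(\<Sum>j\<in>S - {k+1}. e j) = (\<Sum>j\<in>S - {k+1}. d (f j))" by (rule sum.cong) (auto simp: e_def)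
    also have "d y = d (f (k+1)) + (\<Sum>j\<in>S - {k+1}. d (f j))" unfolding dyS using Sfin kS by (rule sum.remove)
    ultimately have sumeq: "(\<Sum>j\<in>S. e j) = h + d y" by (simp add: e_def algebra_simps)
    have eC: "\<forall>j\<in>S. e j \<in> C (j - 1)"
    proof
      fix j assume "j \<in> S"
      show "e j \<in> C (j - 1)"
      proof (cases "j = k + 1")
        case True
        have "d (f j) \<in> C (j - 1)" using f(2) dC by blast
        moreover have "h \<in> C (j - 1)" using hC True by simp
        ultimately show ?thesis using True Csub by (simp add: e_def subspace_add)
      next
        case False then show ?thesis using f(2) dC by (simp add: e_def)
      qed
    qed
    have "L (e (k+1)) \<le> L (\<Sum>j\<in>S. e j)"
      using deg_bound[OF assms(1) Ldeg Sfin _ eC kS] by (simp add: inj_on_def)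
    then have "L (h + d (f (k+1))) \<le> L (h + d y)" using sumeq by (simp add: e_def)
    then show ?thesis using f(2) by blast
  qed
  define Z where "Z = (\<lambda>k. {c \<in> C k. d c = 0})"
  define B where "B = (\<lambda>k. d ` C (k + 1))"
  have Zsub: "subspace (Z k)" for k
    unfolding Z_def using Csub[of k]
    by (intro subspaceI) (auto simp: subspace_0 subspace_add subspace_scale dadd dsc dA.zero)
  have Bsub: "subspace (B k)" for k
  proof (rule subspaceI)
    show "0 \<in> B k" unfolding B_def using Csub[of "k+1"] dA.zero
      by (metis image_eqI subspace_0)
  next
    fix x y assume "x \<in> B k" "y \<in> B k"
    then obtain a b where "a \<in> C (k+1)" "b \<in> C (k+1)" "x = d a" "y = d b" unfolding B_def by blast
    then show "x + y \<in> B k" unfolding B_def using Csub[of "k+1"]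
      by (metis dadd image_eqI subspace_add)
  next
    fix c x assume "x \<in> B k"
    then obtain a where "a \<in> C (k+1)" "x = d a" unfolding B_def by blast
    then show "scale c x \<in> B k" unfolding B_def using Csub[of "k+1"]
      by (metis dsc image_eqI subspace_scale)
  qed
  have BZ: "B k \<subseteq> Z k" for k
    unfolding B_def Z_def using dC[of _ "k+1"] dd by auto
  have ZC: "Z k \<subseteq> C k" for k unfolding Z_def by auto
  have baZ: "best_approx scale (Z k) L" for k
    unfolding best_approx_def
  proof (intro allI impI ballI)
    fix W v assume W: "subspace W \<and> W \<subset> Z k" and v: "v \<in> Z k - W"
    have "W \<subset> C k" using W v ZC[of k] by blast
    moreover have "v \<in> C k - W" using v ZC[of k] by blast
    ultimately show "\<exists>w0\<in>W. \<forall>w\<in>W. L (v - w0) \<le> L (v - w)"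
      using assms(3) W unfolding best_approx_def by blast
  qed
  have "\<forall>k. \<exists>H. \<exists>A. subspace H \<and> H \<subseteq> Z k \<and> H \<inter> B k = {0} \<and>
     {u + w | u w. u \<in> H \<and> w \<in> B k} = Z k \<and> subspace A \<and> B k \<subseteq> A \<and> A \<subseteq> C k \<and>
     A \<inter> H = {0} \<and> orth L A H \<and> {u + w | u w. u \<in> A \<and> w \<in> H} = C k"
  proof
    fix k
    have "L 0 = -\<infinity>" using L0 by simp
    then have o0: "orth L {0} (B k)" unfolding orth_def by simp
    have "{0} \<inter> B k = {0}" using Bsub subspace_0 by blast
    then obtain H where H: "subspace H" "H \<subseteq> Z k" "H \<inter> B k = {0}" "orth L H (B k)"
       "{u + w | u w. u \<in> H \<and> w \<in> B k} = Z k"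
      using orth_compl[OF Ltri Lsc Zsub baZ Bsub BZ subspace_single_0 _ _ o0] Zsub[of k]
      by (auto simp: subspace_0)
    have oBH: "orth L (B k) H" using H(4) unfolding orth_def by (metis add.commute max.commute)
    have BH: "B k \<inter> H = {0}" using H(3) by blast
    obtain A where A: "subspace A" "B k \<subseteq> A" "A \<subseteq> C k" "A \<inter> H = {0}" "orth L A H"
      "{u + w | u w. u \<in> A \<and> w \<in> H} = C k"
    proof -
      have HCk: "H \<subseteq> C k" using H(2) ZC by blast
      have BCk: "B k \<subseteq> C k" using BZ ZC by blast
      show ?thesis using orth_compl[OF Ltri Lsc Csub assms(3)[rule_format] H(1) HCk Bsub BCk BH oBH] that by blast
    qed
    show "\<exists>H. \<exists>A. subspace H \<and> H \<subseteq> Z k \<and> H \<inter> B k = {0} \<and>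
     {u + w | u w. u \<in> H \<and> w \<in> B k} = Z k \<and> subspace A \<and> B k \<subseteq> A \<and> A \<subseteq> C k \<and>
     A \<inter> H = {0} \<and> orth L A H \<and> {u + w | u w. u \<in> A \<and> w \<in> H} = C k"
      using H A by (intro exI[of _ H] exI[of _ A] conjI) assumption+
  qed
  from choice[OF this] obtain Hf where "\<forall>k. \<exists>A. subspace (Hf k) \<and> Hf k \<subseteq> Z k \<and> Hf k \<inter> B k = {0} \<and>
     {u + w | u w. u \<in> Hf k \<and> w \<in> B k} = Z k \<and> subspace A \<and> B k \<subseteq> A \<and> A \<subseteq> C k \<and>
     A \<inter> Hf k = {0} \<and> orth L A (Hf k) \<and> {u + w | u w. u \<in> A \<and> w \<in> Hf k} = C k" by blast
  from choice[OF this] obtain Af where P: "\<forall>k. subspace (Hf k) \<and> Hf k \<subseteq> Z k \<and> Hf k \<inter> B k = {0} \<and>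
     {u + w | u w. u \<in> Hf k \<and> w \<in> B k} = Z k \<and> subspace (Af k) \<and> B k \<subseteq> Af k \<and> Af k \<subseteq> C k \<and>
     Af k \<inter> Hf k = {0} \<and> orth L (Af k) (Hf k) \<and> {u + w | u w. u \<in> Af k \<and> w \<in> Hf k} = C k" by blast
  have Hsub: "\<And>k. subspace (Hf k)" and HZ: "\<And>k. Hf k \<subseteq> Z k"
    and HBZ: "\<And>k. {u + w | u w. u \<in> Hf k \<and> w \<in> B k} = Z k"
    and Asub: "\<And>k. subspace (Af k)" and BA: "\<And>k. B k \<subseteq> Af k" and AC: "\<And>k. Af k \<subseteq> C k"
    and AH: "\<And>k. Af k \<inter> Hf k = {0}" and AHo: "\<And>k. orth L (Af k) (Hf k)"
    and AHC: "\<And>k. {u + w | u w. u \<in> Af k \<and> w \<in> Hf k} = C k"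
    using P by blast+
  have dH: "\<And>k h. h \<in> Hf k \<Longrightarrow> d h = 0" using HZ unfolding Z_def by blast
  have HC: "\<And>k. Hf k \<subseteq> C k" using HZ ZC by blast
  have d0: "d 0 = 0" by (rule dA.zero)
  have S1: "subcomplex scale C d Af" unfolding subcomplex_def
  proof (intro allI conjI)
    fix k
    show "subspace (Af k)" by (rule Asub)
    show "Af k \<subseteq> C k" by (rule AC)
    have "d ` Af k \<subseteq> B (k - 1)" unfolding B_def using AC[of k] by auto
    then show "d ` Af k \<subseteq> Af (k - 1)" using BA by blast
  qed
  have S2: "subcomplex scale C d Hf" unfolding subcomplex_def
  proof (intro allI conjI)
    fix k
    show "subspace (Hf k)" by (rule Hsub)
    show "Hf k \<subseteq> C k" by (rule HC)
    show "d ` Hf k \<subseteq> Hf (k - 1)" using dH subspace_0[OF Hsub] by auto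
  qed
  have S3: "\<And>a h k. a \<in> Af k \<Longrightarrow> h \<in> Hf k \<Longrightarrow> L (a + h) = max (L a) (L h)"
    using AHo unfolding orth_def by blast
  have S5a: "bij_betw (hom_class d) (Hf k) (homology_deg C d k)" for k
    unfolding bij_betw_def
  proof
      show "inj_on (hom_class d) (Hf k)"
      proof (rule inj_onI)
        fix h1 h2 assume h1: "h1 \<in> Hf k" and h2: "h2 \<in> Hf k" and eq: "hom_class d h1 = hom_class d h2"
        have "h1 \<in> hom_class d h2" using hc_mem[of d h1, OF d0] eq by simp
        then obtain y where y: "h1 = h2 + d y" using hc_rep by blast
        have "h2 - h1 \<in> C k" using subspace_diff[OF Csub HC[THEN subsetD, OF h2] HC[THEN subsetD, OF h1]] .
        then obtain y' where y': "y' \<in> C (k+1)" "L ((h2 - h1) + d y') \<le> L ((h2 - h1) + d y)"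
          using G4 by blast
        have "(h2 - h1) + d y = 0" using y by simp
        then have "L ((h2 - h1) + d y') \<le> L 0" using y' by simp
        also have "L 0 = -\<infinity>" using L0 by simp
        finally have "L ((h2 - h1) + d y') = -\<infinity>" by simp
        then have "(h2 - h1) + d y' = 0" using L0[of "(h2 - h1) + d y'"] by simp
        then have "h1 - h2 = d y'" by (simp add: algebra_simps)
        then have "h1 - h2 \<in> Af k" using BA y' unfolding B_def by blast
        moreover have "h1 - h2 \<in> Hf k" using h1 h2 Hsub by (simp add: subspace_diff)
        ultimately have "h1 - h2 = 0" using AH by blast
        then show "h1 = h2" by simp
      qed
      show "hom_class d ` Hf k = homology_deg C d k"
        unfolding homology_deg_def
      proof
        show "hom_class d ` Hf k \<subseteq> hom_class d ` {c \<in> C k. d c = 0}"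
          using HZ unfolding Z_def by blast
        show "hom_class d ` {c \<in> C k. d c = 0} \<subseteq> hom_class d ` Hf k"
        proof
          fix x assume "x \<in> hom_class d ` {c \<in> C k. d c = 0}"
          then obtain z where z: "z \<in> Z k" "x = hom_class d z" unfolding Z_def by blast
          have "z \<in> {u + w | u w. u \<in> Hf k \<and> w \<in> B k}" using HBZ[of k] z(1) by (rule ssubst)
          then obtain u w where uw: "z = u + w" "u \<in> Hf k" "w \<in> B k" by blast
          then obtain y where "w = d y" unfolding B_def by blast
          then have "x = hom_class d u" using z uw hc_shift[OF dadd] by simp
          then show "x \<in> hom_class d ` Hf k" using uw by blast
        qed
      qed
  qed
  have S5b: "spectral_invariant d L (hom_class d h) = L h" if h: "h \<in> Hf k" for h k
    unfolding spectral_invariant_def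
    proof (rule antisym)
      show "Inf (L ` {c. d c = 0 \<and> hom_class d c = hom_class d h}) \<le> L h"
        using dH[OF h] by (intro Inf_lower) auto
      show "L h \<le> Inf (L ` {c. d c = 0 \<and> hom_class d c = hom_class d h})"
      proof (rule Inf_greatest)
        fix x assume "x \<in> L ` {c. d c = 0 \<and> hom_class d c = hom_class d h}"
        then obtain c where c: "hom_class d c = hom_class d h" "x = L c" by blast
        have "c \<in> hom_class d h" using hc_mem[of d c, OF d0] c by simp
        then obtain y where y: "c = h + d y" using hc_rep by blast
        obtain y' where y': "y' \<in> C (k+1)" "L (h + d y') \<le> L (h + d y)"
          using G4 h HC by blast
        have "d y' \<in> Af k" using BA y' unfolding B_def by blast
        then have "L (d y' + h) = max (L (d y')) (L h)" using AHo h unfolding orth_def by blast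
        then have "L h \<le> L (h + d y')" by (simp add: add.commute)
        then show "L h \<le> x" using y' y c by simp
      qed
    qed
  have S6: "a \<in> d ` Af (k + 1)" if a: "a \<in> Af k" "d a = 0" for k a
  proof -
    have "a \<in> Z k" using a AC unfolding Z_def by blast
    then have "a \<in> {u + w | u w. u \<in> Hf k \<and> w \<in> B k}" using HBZ[of k] by simp
    then obtain u w where uw: "a = u + w" "u \<in> Hf k" "w \<in> B k" by blast
    have "u = a - w" using uw by simp
    then have "u \<in> Af k" using subspace_diff[OF Asub a(1) BA[THEN subsetD, OF uw(3)]] by simp
    then have "u = 0" using uw AH by blast
    then have aw: "a = w" using uw by simp
    then obtain y where y: "y \<in> C (k+1)" "a = d y" using uw unfolding B_def by blast
    have "y \<in> {u + w | u w. u \<in> Af (k+1) \<and> w \<in> Hf (k+1)}" using AHC[of "k+1"] y(1) by (rule ssubst)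
    then obtain a' h' where "y = a' + h'" "a' \<in> Af (k+1)" "h' \<in> Hf (k+1)" by blast
    then have "a = d a'" using y dH dadd by simp
    then show "a \<in> d ` Af (k + 1)" using \<open>a' \<in> Af (k+1)\<close> by blast
  qed
  show ?thesis
    apply (rule exI[of _ Af], rule exI[of _ Hf])
    by (intro conjI allI ballI impI) (assumption | rule S1 S2 AHC AH S3 dH S5a S5b S6)+
qed

end
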